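(* Let $n\in\mathbb{R}_+^I$. Consider the problem: minimize $\beta(m)$ subject to $\sum_{j\in i}m_{ji}=n_i$ for $i\in\mathcal{I}$, over $m_{ji}\ge0$ ($i\in\mathcal{I}$, $j\in i$). Its Lagrange dual (with multipliers $\lambda\in\mathbb{R}^I$ for the equality constraints, after substituting $\Lambda_i=e^{\lambda_i}$) is the problem $$\text{maximize}\ \sum_{i\in\mathcal{I}}n_i\log\Lambda_i\quad\text{subject to}\quad\sum_{i: j\in i}\frac{\Lambda_i}{\mu_{ji}}\le1\ \ (j\in\mathcal{J})\quad\text{over}\ \Lambda_i\ge0,\ i\in\mathcal{I}.$$
   Context: Finite set of queues $\mathcal{J}$, finite set of routes $\mathcal{I}$ ($I=|\mathcal{I}|$), each route a subset of $\mathcal{J}$, rates $\mu_{ji}>0$ for $j\in i$. For $m=(m_{ji}: j\in i)\ge0$ with $m_j=\sum_{i: j\in i}m_{ji}$, $\beta(m)=\sum_{j\in\mathcal{J}}\sum_{i: j\in i,\,m_{ji}>0}m_{ji}\log\frac{m_{ji}\mu_{ji}}{m_j}$. *)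

theory Defs
  imports "HOL-Analysis.Analysis"
begin

text \<open>Queues have type 'j; a route is a set of queues; Rt is the finite set of routes.
  Quantities indexed by pairs (j,i) with j in i are functions of type 'j => 'j set => real.\<close>

definition load :: "'j set set \<Rightarrow> ('j \<Rightarrow> 'j set \<Rightarrow> real) \<Rightarrow> 'j \<Rightarrow> real" where
  "load Rt m j = (\<Sum>i\<in>{i\<in>Rt. j \<in> i}. m j i)"

definition beta :: "'j set \<Rightarrow> 'j set set \<Rightarrow> ('j \<Rightarrow> 'j set \<Rightarrow> real)
    \<Rightarrow> ('j \<Rightarrow> 'j set \<Rightarrow> real) \<Rightarrow> real" where
  "beta J Rt mu m = (\<Sum>j\<in>J. \<Sum>i\<in>{i\<in>Rt. j \<in> i \<and> m j i > 0}.
      m j i * ln (m j i * mu j i / load Rt m j))"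

definition lagrangian :: "'j set \<Rightarrow> 'j set set \<Rightarrow> ('j \<Rightarrow> 'j set \<Rightarrow> real) \<Rightarrow> ('j set \<Rightarrow> real)
    \<Rightarrow> ('j \<Rightarrow> 'j set \<Rightarrow> real) \<Rightarrow> ('j set \<Rightarrow> real) \<Rightarrow> real" where
  "lagrangian J Rt mu n m lam =
     beta J Rt mu m + (\<Sum>i\<in>Rt. lam i * (n i - (\<Sum>j\<in>i. m j i)))"

definition dual_fun :: "'j set \<Rightarrow> 'j set set \<Rightarrow> ('j \<Rightarrow> 'j set \<Rightarrow> real) \<Rightarrow> ('j set \<Rightarrow> real)
    \<Rightarrow> ('j set \<Rightarrow> real) \<Rightarrow> ereal" where
  "dual_fun J Rt mu n lam =
     (INF m\<in>{m. \<forall>i\<in>Rt. \<forall>j\<in>i. m j i \<ge> 0}. ereal (lagrangian J Rt mu n m lam))"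

definition elog :: "real \<Rightarrow> ereal" where
  "elog x = (if x > 0 then ereal (ln x) else -\<infinity>)"

end

theory Submission
  imports Defs
begin

lemma term_ineq:
  fixes m M mu l :: real
  assumes "m > 0" "M > 0" "mu > 0"
  shows "m * ln (m * mu / M) \<ge> l * m + m - M * (exp l / mu)"
proof -
  define x where "x = m * mu / (M * exp l)"
  have x: "x > 0" using assms by (simp add: x_def)
  have "ln (1/x) \<le> 1/x - 1" using x by (intro ln_le_minus_one) simp
  hence "ln x \<ge> 1 - 1/x" using x by (simp add: ln_div)
  have e: "ln (m * mu / M) = ln x + l" unfolding x_def using assms
    by (simp add: ln_div ln_mult)
  have "m * ln (m * mu / M) = m * ln x + l * m" by (simp add: e algebra_simps)
  also have "\<dots> \<ge> m * (1 - 1/x) + l * m" using \<open>ln x \<ge> 1 - 1/x\<close> assms by simp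
  also have "m * (1 - 1/x) = m - M * (exp l / mu)" unfolding x_def using assms
    by (simp add: field_simps)
  finally show ?thesis by simp
qed

lemma gibbs:
  fixes m mu l :: "'a \<Rightarrow> real"
  assumes "finite S" "\<forall>i\<in>S. m i \<ge> 0" "\<forall>i\<in>S. mu i > 0" "(\<Sum>i\<in>S. exp (l i) / mu i) \<le> 1"
  shows "(\<Sum>i\<in>S. l i * m i) \<le> (\<Sum>i\<in>{i\<in>S. m i > 0}. m i * ln (m i * mu i / (\<Sum>i\<in>S. m i)))"
proof -
  define M where "M = (\<Sum>i\<in>S. m i)"
  define P where "P = {i\<in>S. m i > 0}"
  have fP: "finite P" using assms(1) by (simp add: P_def)
  have PS: "P \<subseteq> S" by (auto simp: P_def)
  have s1: "(\<Sum>i\<in>S. l i * m i) = (\<Sum>i\<in>P. l i * m i)"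
    by (rule sum.mono_neutral_right[OF assms(1) PS]) (use assms(2) in \<open>auto simp: P_def\<close>)
  have s2: "M = (\<Sum>i\<in>P. m i)" unfolding M_def
    by (rule sum.mono_neutral_right[OF assms(1) PS]) (use assms(2) in \<open>auto simp: P_def\<close>)
  show ?thesis
  proof (cases "P = {}")
    case True
    then have z: "\<forall>i\<in>S. m i = 0" using assms(2) by (force simp: P_def)
    have e: "{i\<in>S. m i > 0} = {}" using z by auto
    have "(\<Sum>i\<in>S. l i * m i) = 0" using z by simp
    then show ?thesis unfolding e sum.empty by linarith
  next
    case False
    have Mpos: "M > 0" unfolding s2 using False fP by (intro sum_pos) (auto simp: P_def)
    have "(\<Sum>i\<in>P. m i * ln (m i * mu i / M)) \<ge> (\<Sum>i\<in>P. l i * m i + m i - M * (exp (l i) / mu i))"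
      by (intro sum_mono term_ineq) (use Mpos assms PS in \<open>auto simp: P_def\<close>)
    also have "(\<Sum>i\<in>P. l i * m i + m i - M * (exp (l i) / mu i))
        = (\<Sum>i\<in>P. l i * m i) + M - M * (\<Sum>i\<in>P. exp (l i) / mu i)"
      by (simp add: sum.distrib sum_subtractf sum_distrib_left s2)
    also have "(\<Sum>i\<in>P. exp (l i) / mu i) \<le> (\<Sum>i\<in>S. exp (l i) / mu i)"
      by (rule sum_mono2[OF assms(1) PS]) (use assms(3) in \<open>auto intro: less_imp_le\<close>)
    hence "M * (\<Sum>i\<in>P. exp (l i) / mu i) \<le> M"
      using assms(4) Mpos by (intro mult_left_le) auto
    hence "(\<Sum>i\<in>P. l i * m i) \<le> (\<Sum>i\<in>P. l i * m i) + M - M * (\<Sum>i\<in>P. exp (l i) / mu i)"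
      by simp
    finally show ?thesis using s1 by (simp add: M_def P_def)
  qed
qed


lemma swap_sum:
  assumes "finite J" "finite Rt" "\<forall>i\<in>Rt. i \<subseteq> J"
  shows "(\<Sum>i\<in>Rt. \<Sum>j\<in>i. f j i) = (\<Sum>j\<in>J. \<Sum>i\<in>{i\<in>Rt. j \<in> i}. f j i)"
proof -
  have "(\<Sum>i\<in>Rt. \<Sum>j\<in>i. f j i) = (\<Sum>i\<in>Rt. \<Sum>j\<in>J. if j \<in> i then f j i else 0)"
  proof (rule sum.cong[OF refl])
    fix i assume "i \<in> Rt"
    hence "i = {j\<in>J. j \<in> i}" using assms(3) by auto
    hence "(\<Sum>j\<in>i. f j i) = (\<Sum>j\<in>{j\<in>J. j \<in> i}. f j i)" by simp
    also have "\<dots> = (\<Sum>j\<in>J. if j \<in> i then f j i else 0)" by (rule sum.inter_filter[OF assms(1)])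
    finally show "(\<Sum>j\<in>i. f j i) = (\<Sum>j\<in>J. if j \<in> i then f j i else 0)" .
  qed
  also have "\<dots> = (\<Sum>j\<in>J. \<Sum>i\<in>Rt. if j \<in> i then f j i else 0)" by (rule sum.swap)
  also have "\<dots> = (\<Sum>j\<in>J. \<Sum>i\<in>{i\<in>Rt. j \<in> i}. f j i)"
    by (rule sum.cong[OF refl]) (simp add: sum.inter_filter[OF assms(2)])
  finally show ?thesis .
qed

lemma lag_rewrite:
  assumes "finite J" "finite Rt" "\<forall>i\<in>Rt. i \<subseteq> J"
  shows "lagrangian J Rt mu n m lam = (\<Sum>i\<in>Rt. n i * lam i) +
     (\<Sum>j\<in>J. (\<Sum>i\<in>{i\<in>Rt. j \<in> i \<and> m j i > 0}. m j i * ln (m j i * mu j i / load Rt m j))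
              - (\<Sum>i\<in>{i\<in>Rt. j \<in> i}. lam i * m j i))"
proof -
  have "(\<Sum>i\<in>Rt. lam i * (n i - (\<Sum>j\<in>i. m j i))) = (\<Sum>i\<in>Rt. n i * lam i) - (\<Sum>i\<in>Rt. \<Sum>j\<in>i. lam i * m j i)"
    by (simp add: algebra_simps sum_subtractf sum_distrib_left)
  also have "(\<Sum>i\<in>Rt. \<Sum>j\<in>i. lam i * m j i) = (\<Sum>j\<in>J. \<Sum>i\<in>{i\<in>Rt. j \<in> i}. lam i * m j i)"
    by (rule swap_sum[OF assms])
  finally show ?thesis unfolding lagrangian_def beta_def by (simp add: sum_subtractf)
qed

lemma dual_feasible:
  assumes "finite J" "finite Rt" "\<forall>i\<in>Rt. i \<subseteq> J"
    and "\<forall>i\<in>Rt. \<forall>j\<in>i. mu j i > 0"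
    and feas: "\<forall>j\<in>J. (\<Sum>i\<in>{i\<in>Rt. j \<in> i}. exp (lam i) / mu j i) \<le> 1"
  shows "dual_fun J Rt mu n lam = ereal (\<Sum>i\<in>Rt. n i * lam i)"
proof -
  let ?A = "{m. \<forall>i\<in>Rt. \<forall>j\<in>i. m j i \<ge> (0::real)}"
  have lb: "lagrangian J Rt mu n m lam \<ge> (\<Sum>i\<in>Rt. n i * lam i)" if m: "m \<in> ?A" for m
  proof -
    have "(\<Sum>j\<in>J. (\<Sum>i\<in>{i\<in>Rt. j \<in> i \<and> m j i > 0}. m j i * ln (m j i * mu j i / load Rt m j))
              - (\<Sum>i\<in>{i\<in>Rt. j \<in> i}. lam i * m j i)) \<ge> 0"
    proof (rule sum_nonneg)
      fix j assume j: "j \<in> J"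
      have g: "(\<Sum>i\<in>{i\<in>Rt. j \<in> i}. lam i * m j i) \<le> (\<Sum>i\<in>{i\<in>{i\<in>Rt. j \<in> i}. m j i > 0}. m j i * ln (m j i * mu j i / (\<Sum>i\<in>{i\<in>Rt. j \<in> i}. m j i)))"
        by (rule gibbs) (use assms(2,4) feas j m in auto)
      have e: "{i\<in>{i\<in>Rt. j \<in> i}. m j i > 0} = {i\<in>Rt. j \<in> i \<and> m j i > 0}" by auto
      show "0 \<le> (\<Sum>i\<in>{i\<in>Rt. j \<in> i \<and> m j i > 0}. m j i * ln (m j i * mu j i / load Rt m j))
              - (\<Sum>i\<in>{i\<in>Rt. j \<in> i}. lam i * m j i)"
        using g unfolding e load_def by simp
    qed
    then show ?thesis unfolding lag_rewrite[OF assms(1-3)] by simp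
  qed
  have z: "(\<lambda>j i. 0::real) \<in> ?A" by simp
  have lz: "lagrangian J Rt mu n (\<lambda>j i. 0) lam = (\<Sum>i\<in>Rt. n i * lam i)"
    unfolding lagrangian_def beta_def by (simp add: mult.commute)
  show ?thesis unfolding dual_fun_def
  proof (rule antisym)
    show "(INF m\<in>?A. ereal (lagrangian J Rt mu n m lam)) \<le> ereal (\<Sum>i\<in>Rt. n i * lam i)"
      using INF_lower[OF z, of "\<lambda>m. ereal (lagrangian J Rt mu n m lam)"] lz by simp
    show "ereal (\<Sum>i\<in>Rt. n i * lam i) \<le> (INF m\<in>?A. ereal (lagrangian J Rt mu n m lam))"
      by (rule INF_greatest) (use lb in simp)
  qed
qed


lemma dual_infeasible:
  assumes "finite J" "finite Rt" "\<forall>i\<in>Rt. i \<subseteq> J"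
    and mupos: "\<forall>i\<in>Rt. \<forall>j\<in>i. mu j i > 0"
    and j0: "j0 \<in> J" and c1: "(\<Sum>i\<in>{i\<in>Rt. j0 \<in> i}. exp (lam i) / mu j0 i) > 1"
  shows "dual_fun J Rt mu n lam = -\<infinity>"
proof -
  let ?A = "{m. \<forall>i\<in>Rt. \<forall>j\<in>i. m j i \<ge> (0::real)}"
  let ?S = "{i\<in>Rt. j0 \<in> i}"
  define c where "c = (\<Sum>i\<in>?S. exp (lam i) / mu j0 i)"
  have c: "c > 1" using c1 by (simp add: c_def)
  have lc: "ln c > 0" using c by simp
  define N where "N = (\<Sum>i\<in>Rt. n i * lam i)"
  define mm where "mm s = (\<lambda>j i. if j = j0 \<and> j0 \<in> i then s * (exp (lam i) / mu j0 i) else (0::real))" for s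
  have key: "lagrangian J Rt mu n (mm s) lam = N - s * c * ln c" if s: "s > 0" for s
  proof -
    have pos: "mm s j0 i > 0" if "i \<in> ?S" for i using that s mupos by (simp add: mm_def)
    have ld: "load Rt (mm s) j0 = s * c"
      unfolding load_def c_def by (simp add: mm_def sum_distrib_left)
    have inner: "(\<Sum>i\<in>{i\<in>Rt. j \<in> i \<and> mm s j i > 0}. mm s j i * ln (mm s j i * mu j i / load Rt (mm s) j))
              - (\<Sum>i\<in>{i\<in>Rt. j \<in> i}. lam i * mm s j i)
           = (if j = j0 then - s * c * ln c else 0)" for j
    proof (cases "j = j0")
      case False then show ?thesis by (simp add: mm_def)
    next
      case True
      have e: "{i\<in>Rt. j0 \<in> i \<and> mm s j0 i > 0} = ?S" using pos by auto
      have "(\<Sum>i\<in>?S. mm s j0 i * ln (mm s j0 i * mu j0 i / (s * c))) =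
            (\<Sum>i\<in>?S. lam i * mm s j0 i - ln c * mm s j0 i)"
      proof (rule sum.cong[OF refl])
        fix i assume i: "i \<in> ?S"
        have mu: "mu j0 i > 0" using i mupos by auto
        have "mm s j0 i * mu j0 i / (s * c) = exp (lam i) / c"
          using i mu s c by (simp add: mm_def)
        then show "mm s j0 i * ln (mm s j0 i * mu j0 i / (s * c)) = lam i * mm s j0 i - ln c * mm s j0 i"
          using c by (simp add: ln_div algebra_simps)
      qed
      also have "\<dots> = (\<Sum>i\<in>?S. lam i * mm s j0 i) - ln c * (s * c)"
        by (simp add: sum_subtractf sum_distrib_left[symmetric] ld[unfolded load_def])
      finally show ?thesis unfolding True e ld by (simp add: algebra_simps)
    qed
    show ?thesis unfolding lag_rewrite[OF assms(1-3)] inner N_def using j0 assms(1)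
      by (simp add: sum.delta)
  qed
  show ?thesis unfolding dual_fun_def bot_ereal_def[symmetric] INF_eq_bot_iff
  proof (intro allI impI)
    fix x :: ereal assume "bot < x"
    then obtain r where r: "ereal r < x"
      by (metis bot_ereal_def ereal_dense2 less_ereal.simps(5) not_MInfty_nonneg) 
    define s where "s = (\<bar>N - r\<bar> + 1) / (c * ln c)"
    have cl: "c * ln c > 0" using c lc by simp
    have s: "s > 0" using cl by (simp add: s_def)
    have "s * c * ln c = \<bar>N - r\<bar> + 1" using cl unfolding s_def by (metis (no_types) mult.assoc nonzero_divide_eq_eq less_irrefl)
    hence "N - s * c * ln c < r" by linarith
    hence "ereal (N - s * c * ln c) < ereal r" by simp
    hence lt: "ereal (N - s * c * ln c) < x" using r by (rule less_trans)
    moreover have "mm s \<in> ?A" using s mupos by (auto simp: mm_def less_imp_le)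
    ultimately show "\<exists>m\<in>?A. ereal (lagrangian J Rt mu n m lam) < x"
      using key[OF s] lt by (intro bexI[of _ "mm s"]) auto
  qed
qed


lemma termwise:
  fixes n La d t s :: real
  assumes "n \<ge> 0" "La \<ge> 0" "t > 0" "s > 0" "ln t = - d"
  shows "ereal n * elog La \<le> ereal (n * ln (t * La + s) + n * d)"
proof (cases "La > 0")
  case True
  have tp: "t * La > 0" using True assms by simp
  have "ln (t * La) \<le> ln (t * La + s)" using tp assms by (subst ln_le_cancel_iff) auto
  hence "ln La \<le> ln (t * La + s) + d" using True assms by (simp add: ln_mult)
  hence "n * ln La \<le> n * (ln (t * La + s) + d)" using assms(1) by (rule mult_left_mono)
  then show ?thesis using True by (simp add: elog_def algebra_simps)
next
  case False
  hence "La = 0" using assms by simp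
  then show ?thesis using assms(1) by (cases "n = 0") (auto simp: elog_def)
qed

theorem lemma11:
  fixes J :: "'j set" and Rt :: "'j set set"
    and mu :: "'j \<Rightarrow> 'j set \<Rightarrow> real" and n :: "'j set \<Rightarrow> real"
  assumes "finite J" and "finite Rt" and "\<forall>i\<in>Rt. i \<subseteq> J"
    and "\<forall>i\<in>Rt. \<forall>j\<in>i. mu j i > 0"
    and "\<forall>i\<in>Rt. n i \<ge> 0"
  shows "(\<forall>lam. dual_fun J Rt mu n lam =
            (if \<forall>j\<in>J. (\<Sum>i\<in>{i\<in>Rt. j \<in> i}. exp (lam i) / mu j i) \<le> 1
             then ereal (\<Sum>i\<in>Rt. n i * lam i) else -\<infinity>))
       \<and> (SUP lam. dual_fun J Rt mu n lam) =
         (SUP La\<in>{La. (\<forall>i\<in>Rt. La i \<ge> 0) \<and>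
                       (\<forall>j\<in>J. (\<Sum>i\<in>{i\<in>Rt. j \<in> i}. La i / mu j i) \<le> 1)}.
            \<Sum>i\<in>Rt. ereal (n i) * elog (La i))"
proof -
  have P1: "\<forall>lam. dual_fun J Rt mu n lam =
            (if \<forall>j\<in>J. (\<Sum>i\<in>{i\<in>Rt. j \<in> i}. exp (lam i) / mu j i) \<le> 1
             then ereal (\<Sum>i\<in>Rt. n i * lam i) else -\<infinity>)"
  proof
    fix lam
    show "dual_fun J Rt mu n lam =
            (if \<forall>j\<in>J. (\<Sum>i\<in>{i\<in>Rt. j \<in> i}. exp (lam i) / mu j i) \<le> 1
             then ereal (\<Sum>i\<in>Rt. n i * lam i) else -\<infinity>)"
    proof (cases "\<forall>j\<in>J. (\<Sum>i\<in>{i\<in>Rt. j \<in> i}. exp (lam i) / mu j i) \<le> 1")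
      case True
      then show ?thesis using dual_feasible[OF assms(1-4) True] by simp
    next
      case False
      then obtain j0 where "j0 \<in> J" "(\<Sum>i\<in>{i\<in>Rt. j0 \<in> i}. exp (lam i) / mu j0 i) > 1"
        by (auto simp: not_le)
      then show ?thesis using dual_infeasible[OF assms(1-4)] False by simp
    qed
  qed
  let ?F = "{La. (\<forall>i\<in>Rt. La i \<ge> 0) \<and>
                       (\<forall>j\<in>J. (\<Sum>i\<in>{i\<in>Rt. j \<in> i}. La i / mu j i) \<le> (1::real))}"
  let ?v = "\<lambda>La. \<Sum>i\<in>Rt. ereal (n i) * elog (La i)"
  have le1: "dual_fun J Rt mu n lam \<le> (SUP La\<in>?F. ?v La)" for lam
  proof (cases "\<forall>j\<in>J. (\<Sum>i\<in>{i\<in>Rt. j \<in> i}. exp (lam i) / mu j i) \<le> 1")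
    case True
    have mem: "(\<lambda>i. exp (lam i)) \<in> ?F" using True by auto
    have "?v (\<lambda>i. exp (lam i)) = (\<Sum>i\<in>Rt. ereal (n i * lam i))"
      by (simp add: elog_def)
    also have "\<dots> = ereal (\<Sum>i\<in>Rt. n i * lam i)" by (rule sum_ereal)
    finally have "dual_fun J Rt mu n lam = ?v (\<lambda>i. exp (lam i))" using P1 True by simp
    then show ?thesis using SUP_upper[OF mem, of ?v] by simp
  next
    case False
    have "dual_fun J Rt mu n lam = -\<infinity>" using P1[rule_format, of lam] unfolding if_not_P[OF False] .
    then show ?thesis by simp
  qed
  have le2: "?v La \<le> (SUP lam. dual_fun J Rt mu n lam)" if La: "La \<in> ?F" for La
  proof (rule ereal_le_epsilon2)
    fix e :: real assume e: "e > 0"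
    define N where "N = (\<Sum>i\<in>Rt. n i)"
    have N: "N \<ge> 0" unfolding N_def using assms(5) by (simp add: sum_nonneg)
    define d where "d = e / (N + 1)"
    have d: "d > 0" using e N by (simp add: d_def)
    define t where "t = exp (- d)"
    have t: "t > 0" "t < 1" "ln t = - d" using d by (auto simp: t_def)
    define K where "K = 1 + (\<Sum>j\<in>J. \<Sum>i\<in>{i\<in>Rt. j \<in> i}. 1 / mu j i)"
    have nn: "0 \<le> 1 / mu j' i" if "i \<in> Rt" "j' \<in> i" for j' i
      using assms(4) that by (simp add: less_imp_le)
    have Kj: "(\<Sum>i\<in>{i\<in>Rt. j \<in> i}. 1 / mu j i) \<le> K" if "j \<in> J" for j
    proof -
      have "(\<Sum>i\<in>{i\<in>Rt. j \<in> i}. 1 / mu j i) \<le> (\<Sum>j\<in>J. \<Sum>i\<in>{i\<in>Rt. j \<in> i}. 1 / mu j i)"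
        by (rule member_le_sum[OF that _ assms(1)])
           (auto intro!: sum_nonneg nn)
      then show ?thesis unfolding K_def by simp
    qed
    have "0 \<le> (\<Sum>j\<in>J. \<Sum>i\<in>{i\<in>Rt. j \<in> i}. 1 / mu j i)"
      using assms(4) by (intro sum_nonneg) (auto intro: less_imp_le)
    hence K: "K > 0" unfolding K_def by linarith
    define s where "s = (1 - t) / K"
    have s: "s > 0" using t K by (simp add: s_def)
    define lam where "lam i = ln (t * La i + s)" for i
    have pos: "t * La i + s > 0" if "i \<in> Rt" for i using La that t s
      by (simp add: add_nonneg_pos)
    have feas: "\<forall>j\<in>J. (\<Sum>i\<in>{i\<in>Rt. j \<in> i}. exp (lam i) / mu j i) \<le> 1"
    proof
      fix j assume j: "j \<in> J"
      have "(\<Sum>i\<in>{i\<in>Rt. j \<in> i}. exp (lam i) / mu j i)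
          = (\<Sum>i\<in>{i\<in>Rt. j \<in> i}. t * (La i / mu j i) + s * (1 / mu j i))"
        by (rule sum.cong[OF refl]) (simp add: lam_def pos add_divide_distrib)
      also have "\<dots> = t * (\<Sum>i\<in>{i\<in>Rt. j \<in> i}. La i / mu j i) + s * (\<Sum>i\<in>{i\<in>Rt. j \<in> i}. 1 / mu j i)"
        by (simp add: sum.distrib sum_distrib_left)
      also have "\<dots> \<le> t * 1 + s * K"
        using La j Kj[OF j] t s by (intro add_mono mult_left_mono) auto
      also have "\<dots> = 1" using K by (simp add: s_def)
      finally show "(\<Sum>i\<in>{i\<in>Rt. j \<in> i}. exp (lam i) / mu j i) \<le> 1" .
    qed
    have "?v La \<le> (\<Sum>i\<in>Rt. ereal (n i * lam i + n i * d))"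
      unfolding lam_def
      by (rule sum_mono, rule termwise) (use assms(5) La t s in auto)
    also have "\<dots> = ereal (\<Sum>i\<in>Rt. n i * lam i + n i * d)" by (rule sum_ereal)
    also have "(\<Sum>i\<in>Rt. n i * lam i + n i * d) = (\<Sum>i\<in>Rt. n i * lam i) + N * d"
      by (simp add: sum.distrib N_def sum_distrib_right)
    also have "N * d \<le> e"
    proof -
      have "N * d = e * (N / (N + 1))" using N by (simp add: d_def)
      also have "\<dots> \<le> e * 1" using e N by (intro mult_left_mono) auto
      finally show ?thesis by simp
    qed
    hence "ereal ((\<Sum>i\<in>Rt. n i * lam i) + N * d) \<le> ereal (\<Sum>i\<in>Rt. n i * lam i) + ereal e"
      by simp
    also have "ereal (\<Sum>i\<in>Rt. n i * lam i) = dual_fun J Rt mu n lam" using P1 feas by simp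
    also have "\<dots> \<le> (SUP lam. dual_fun J Rt mu n lam)" by (rule SUP_upper) simp
    finally show "?v La \<le> (SUP lam. dual_fun J Rt mu n lam) + ereal e" by (simp add: add_right_mono)
  qed
  have "(SUP lam. dual_fun J Rt mu n lam) = (SUP La\<in>?F. ?v La)"
    by (rule antisym) (use le1 le2 in \<open>auto intro: SUP_least\<close>)
  with P1 show ?thesis by simp
qed

end
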